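(* Let $n_c = n_c(n) \to \infty$ with $n_c < n/2$. Let $\rho \in (0,1)$ and $\beta \in (0,1)$ be fixed scalars. Suppose $R \in [0,1]^{n_c\times n_c}$ satisfies $R_{uv} < \rho$ for all entries, and suppose $\Lambda^c \in [0,1]^{n_c \times n_c}$ satisfies, entrywise, $\Lambda^c_{uv} \le \beta$ and $\Lambda^c_{uv} = \omega(n_c^{-1}\log n_c)$ (uniformly over off-diagonal entries). Then for every $\epsilon \in (0, 1-\beta-(1-\beta)\rho)$ there exists a symmetric $\Lambda \in [0,1]^{n\times n}$ whose order-$n_c$ principal submatrix is $\Lambda^c$ such that, for $(A,B) \sim \mathrm{CorrER}(\Lambda,R)$ and using the naive padding scheme, $$\Pr[P^* \neq I_{n_c}] \ \ge\ 1 - \exp\left\{-C\,\epsilon^2 (\log n_c)^2\right\}$$ for all sufficiently large $n_c$, where $C>0$ is a universal constant. Here the event $P^*\neq I_{n_c}$ means that no solution of the padded graph matching problem has order-$n_c$ principal submatrix equal to $I_{n_c}$.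
   Context: Correlated Erdős–Rényi model: let $0 < n_c \le n$, $\Lambda \in [0,1]^{n\times n}$ symmetric with order-$n_c$ principal submatrix $\Lambda^c$, and $R \in [0,1]^{n_c \times n_c}$ symmetric. A pair $(A,B) \sim \mathrm{CorrER}(\Lambda,R)$ consists of adjacency matrices of simple undirected graphs (symmetric, zero diagonal, $\{0,1\}$-valued), $A$ of size $n_c\times n_c$ and $B$ of size $n \times n$, such that: the entries $B_{uv}$, $u<v\le n$, are independent with $B_{uv} \sim \mathrm{Bernoulli}(\Lambda_{uv})$; the entries $A_{uv}$, $u<v\le n_c$, are independent with $A_{uv}\sim\mathrm{Bernoulli}(\Lambda_{uv})$; all entries of $A$ and $B$ are mutually independent except that for each $u<v\le n_c$, $\mathrm{corr}(A_{uv},B_{uv}) = R_{uv}$. (Thus vertex $u\in[n_c]$ of $A$ truly corresponds to vertex $u$ of $B$.) Graph matching with padding: given padded $n\times n$ matrices $\tilde A, \tilde B$, consider the problem $\operatorname{argmax}_{P \in \mathcal{P}_n} \operatorname{trace}(\tilde A P \tilde B P^T)$ (equivalently $\operatorname{argmin}_P \|\tilde A - P\tilde B P^T\|_F$), where $\mathcal{P}_n$ is the set of $n\times n$ permutation matrices; $P^*$ denotes the order-$n_c$ principal submatrix of a solution. The naive padding scheme uses $\tilde A = A \oplus \mathbf{0}_{n-n_c}$ and $\tilde B = B$, where $M\oplus M' = \begin{pmatrix} M & 0\\ 0 & M'\end{pmatrix}$ and $\mathbf{0}_k$ is the $k\times k$ zero matrix. *)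

theory Defs
  imports "HOL-Probability.Probability" "HOL-Combinatorics.Permutations"
begin

text \<open>Matrices are functions nat => nat => _, indices 0-based: an n x n matrix uses
  indices in {0..<n}; the order-k principal submatrix uses indices in {0..<k}.\<close>

text \<open>Joint law of one correlated edge pair (A_uv, B_uv): both marginals Bernoulli(p),
  correlation r (for p in (0,1), r in [0,1]): with prob. r the two coincide,
  otherwise they are independent.  P(1,1) = p^2 + r p (1-p).\<close>
definition corr_pair :: "real \<Rightarrow> real \<Rightarrow> (bool \<times> bool) pmf" where
  "corr_pair p r = bind_pmf (bernoulli_pmf r) (\<lambda>c.
     if c then map_pmf (\<lambda>x. (x, x)) (bernoulli_pmf p)
     else pair_pmf (bernoulli_pmf p) (bernoulli_pmf p))"

definition vertex_pairs :: "nat \<Rightarrow> (nat \<times> nat) set" where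
  "vertex_pairs n = {(u, v). u < v \<and> v < n}"

text \<open>Law of the pair (A_uv, B_uv) for u < v < n; for v >= nc there is no A-edge
  (the first component is the dummy value False).\<close>
definition edge_pmf :: "nat \<Rightarrow> (nat \<Rightarrow> nat \<Rightarrow> real) \<Rightarrow> (nat \<Rightarrow> nat \<Rightarrow> real)
    \<Rightarrow> nat \<times> nat \<Rightarrow> (bool \<times> bool) pmf" where
  "edge_pmf nc \<Lambda> R e = (case e of (u, v) \<Rightarrow>
     if v < nc then corr_pair (\<Lambda> u v) (R u v)
     else map_pmf (\<lambda>b. (False, b)) (bernoulli_pmf (\<Lambda> u v)))"

definition CorrER :: "nat \<Rightarrow> nat \<Rightarrow> (nat \<Rightarrow> nat \<Rightarrow> real) \<Rightarrow> (nat \<Rightarrow> nat \<Rightarrow> real)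
    \<Rightarrow> ((nat \<Rightarrow> nat \<Rightarrow> bool) \<times> (nat \<Rightarrow> nat \<Rightarrow> bool)) pmf" where
  "CorrER n nc \<Lambda> R = map_pmf (\<lambda>f.
      ((\<lambda>u v. u < nc \<and> v < nc \<and> u \<noteq> v \<and> fst (f (min u v, max u v))),
       (\<lambda>u v. u < n \<and> v < n \<and> u \<noteq> v \<and> snd (f (min u v, max u v)))))
    (Pi_pmf (vertex_pairs n) (False, False) (edge_pmf nc \<Lambda> R))"

definition perm_mat :: "(nat \<Rightarrow> nat) \<Rightarrow> nat \<Rightarrow> nat \<Rightarrow> real" where
  "perm_mat \<pi> i j = (if \<pi> i = j then 1 else 0)"

definition naive_pad :: "nat \<Rightarrow> (nat \<Rightarrow> nat \<Rightarrow> bool) \<Rightarrow> nat \<Rightarrow> nat \<Rightarrow> real" where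
  "naive_pad nc A i j = (if i < nc \<and> j < nc then of_bool (A i j) else 0)"

text \<open>trace(At P Bt P^T) for n x n matrices.\<close>
definition gm_objective :: "nat \<Rightarrow> (nat \<Rightarrow> nat \<Rightarrow> real) \<Rightarrow> (nat \<Rightarrow> nat \<Rightarrow> real)
    \<Rightarrow> (nat \<Rightarrow> nat) \<Rightarrow> real" where
  "gm_objective n At Bt \<pi> =
     (\<Sum>i<n. \<Sum>j<n. \<Sum>k<n. \<Sum>l<n. At i j * perm_mat \<pi> j k * Bt k l * perm_mat \<pi> i l)"

definition gm_solution :: "nat \<Rightarrow> (nat \<Rightarrow> nat \<Rightarrow> real) \<Rightarrow> (nat \<Rightarrow> nat \<Rightarrow> real)
    \<Rightarrow> (nat \<Rightarrow> nat) \<Rightarrow> bool" where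
  "gm_solution n At Bt \<pi> \<longleftrightarrow> \<pi> permutes {..<n} \<and>
     (\<forall>\<sigma>. \<sigma> permutes {..<n} \<longrightarrow> gm_objective n At Bt \<sigma> \<le> gm_objective n At Bt \<pi>)"

definition principal_is_identity :: "nat \<Rightarrow> (nat \<Rightarrow> nat) \<Rightarrow> bool" where
  "principal_is_identity nc \<pi> \<longleftrightarrow>
     (\<forall>i<nc. \<forall>j<nc. perm_mat \<pi> i j = (if i = j then 1 else 0))"

definition naive_mismatch :: "nat \<Rightarrow> nat \<Rightarrow> (nat \<Rightarrow> nat \<Rightarrow> bool) \<Rightarrow> (nat \<Rightarrow> nat \<Rightarrow> bool) \<Rightarrow> bool" where
  "naive_mismatch n nc A B \<longleftrightarrow>
     \<not> (\<exists>\<pi>. gm_solution n (naive_pad nc A) (\<lambda>i j. of_bool (B i j)) \<pi> \<and> principal_is_identity nc \<pi>)"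

end

theory Submission
  imports Defs
begin
lemma pmf_corr_TF:
  assumes "0 \<le> p" "p \<le> 1" "0 \<le> r" "r \<le> 1"
  shows "pmf (corr_pair p r) (True, False) = (1 - r) * (p * (1 - p))"
  using assms by (simp add: corr_pair_def pmf_bind pmf_pair pmf_map vimage_def)

lemma prob_corr_notTF:
  assumes "0 \<le> p" "p \<le> 1" "0 \<le> r" "r \<le> 1"
  shows "measure_pmf.prob (corr_pair p r) (- {(True, False)}) = 1 - (1 - r) * (p * (1 - p))"
proof -
  have "- {(True, False)} = space (measure_pmf (corr_pair p r)) - {(True, False)}" by auto
  then show ?thesis
    using assms measure_pmf.prob_compl[of "{(True, False)}" "corr_pair p r"]
    by (simp add: measure_pmf_single pmf_corr_TF)
qed

lemma finite_vp: "finite (vertex_pairs n)"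
proof -
  have "vertex_pairs n \<subseteq> {..<n} \<times> {..<n}" by (auto simp: vertex_pairs_def)
  then show ?thesis by (rule finite_subset) auto
qed

lemma card_vp: "card (vertex_pairs n) * 2 = n * (n - 1)"
proof (induction n)
  case 0
  then show ?case by (simp add: vertex_pairs_def)
next
  case (Suc n)
  have eq: "vertex_pairs (Suc n) = vertex_pairs n \<union> (\<lambda>u. (u, n)) ` {..<n}"
    by (auto simp: vertex_pairs_def)
  have "card (vertex_pairs (Suc n)) = card (vertex_pairs n) + n"
    unfolding eq by (subst card_Un_disjoint) (auto simp: finite_vp[unfolded vertex_pairs_def] vertex_pairs_def card_image inj_on_def)
  with Suc show ?case by (cases n) (auto simp: algebra_simps)
qed

lemma sum_ind_right: "(\<Sum>l<(n::nat). c l * (if a = l then 1 else 0)) = (if a < n then c a else (0::real))"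
proof -
  have "(\<Sum>l<n. c l * (if a = l then 1 else 0)) = (\<Sum>l<n. if a = l then c l else 0)"
    by (intro sum.cong) auto
  then show ?thesis by (simp add: sum.delta' sum.delta)
qed

lemma obj_simp:
  assumes "\<forall>j<n. \<pi> j < n"
  shows "gm_objective n At Bt \<pi> = (\<Sum>i<n. \<Sum>j<n. At i j * Bt (\<pi> j) (\<pi> i))"
proof -
  have "\<And>i j. i < n \<Longrightarrow> j < n \<Longrightarrow> (\<Sum>k<n. \<Sum>l<n. At i j * perm_mat \<pi> j k * Bt k l * perm_mat \<pi> i l)
     = At i j * Bt (\<pi> j) (\<pi> i)"
  proof -
    fix i j assume ij: "i < n" "j < n"
    have "(\<Sum>k<n. \<Sum>l<n. At i j * perm_mat \<pi> j k * Bt k l * perm_mat \<pi> i l)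
        = (\<Sum>k<n. if k = \<pi> j then (\<Sum>l<n. if l = \<pi> i then At i j * Bt k l else 0) else 0)"
      by (intro sum.cong refl) (simp add: perm_mat_def sum_ind_right)
    also have "\<dots> = At i j * Bt (\<pi> j) (\<pi> i)"
      using assms ij by (simp only: sum.delta sum.delta' finite_lessThan) simp
    finally show "?thesis i j" .
  qed
  then show ?thesis unfolding gm_objective_def by (intro sum.cong refl) auto
qed

definition shiftp :: "nat \<Rightarrow> nat \<Rightarrow> nat" where
  "shiftp nc i = (if i < nc then i + nc else if i < 2 * nc then i - nc else i)"

lemma shiftp_invol: "shiftp nc (shiftp nc i) = i"
  by (auto simp: shiftp_def)

lemma shiftp_permutes: assumes "2 * nc \<le> n" shows "shiftp nc permutes {..<n}"
  unfolding permutes_def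
proof (intro conjI allI impI)
  fix x assume "x \<notin> {..<n}" then show "shiftp nc x = x" using assms by (auto simp: shiftp_def)
next
  fix y show "\<exists>!x. shiftp nc x = y"
    by (rule ex1I[of _ "shiftp nc y"]) (auto simp: shiftp_invol dest: arg_cong[of _ _ "shiftp nc"])
qed

lemma det_mismatch:
  fixes f :: "nat \<times> nat \<Rightarrow> bool \<times> bool"
  assumes n: "2 * nc < n"
    and hB: "\<And>a b. a < b \<Longrightarrow> b < n \<Longrightarrow> nc \<le> b \<Longrightarrow> snd (f (a, b))"
    and uv: "u < v" "v < nc" and fuv: "f (u, v) = (True, False)"
  shows "naive_mismatch n nc (\<lambda>u v. u < nc \<and> v < nc \<and> u \<noteq> v \<and> fst (f (min u v, max u v)))
                               (\<lambda>u v. u < n \<and> v < n \<and> u \<noteq> v \<and> snd (f (min u v, max u v)))"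
    (is "naive_mismatch n nc ?A ?B")
proof (rule ccontr)
  assume "\<not> ?thesis"
  then obtain \<pi> where sol: "gm_solution n (naive_pad nc ?A) (\<lambda>i j. of_bool (?B i j)) \<pi>"
    and pid: "principal_is_identity nc \<pi>"
    unfolding naive_mismatch_def by blast
  define At where "At = naive_pad nc ?A"
  define Bt where "Bt = (\<lambda>i j. of_bool (?B i j) :: real)"
  have pperm: "\<pi> permutes {..<n}" using sol by (simp add: gm_solution_def)
  have pfix: "\<And>i. i < nc \<Longrightarrow> \<pi> i = i"
    using pid unfolding principal_is_identity_def perm_mat_def
    by (metis (mono_tags) zero_neq_one)
  let ?s = "shiftp nc"
  have sperm: "?s permutes {..<n}" using shiftp_permutes n by simp
  have le: "gm_objective n At Bt ?s \<le> gm_objective n At Bt \<pi>"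
    using sol sperm unfolding gm_solution_def At_def Bt_def by blast
  have pin: "\<forall>j<n. \<pi> j < n" using permutes_in_image[OF pperm] by auto
  have sin: "\<forall>j<n. ?s j < n" using permutes_in_image[OF sperm] by auto
  have term_le: "At i j * Bt (\<pi> j) (\<pi> i) \<le> At i j * Bt (?s j) (?s i)" if "i < n" "j < n" for i j
  proof (cases "i < nc \<and> j < nc \<and> ?A i j")
    case True
    then have ij: "i \<noteq> j" "i < nc" "j < nc" by auto
    have "?B (?s j) (?s i)"
      using ij n hB[of "min (j + nc) (i + nc)" "max (j + nc) (i + nc)"]
      by (auto simp: shiftp_def min_def max_def)
    then have "Bt (?s j) (?s i) = 1" by (simp add: Bt_def)
    moreover have "Bt (\<pi> j) (\<pi> i) \<le> 1" by (simp add: Bt_def)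
    moreover have "At i j = 1" using True by (simp add: At_def naive_pad_def)
    ultimately show ?thesis by simp
  next
    case False
    then have "At i j = 0" by (auto simp: At_def naive_pad_def)
    then show ?thesis by simp
  qed
  have term_lt: "At u v * Bt (\<pi> v) (\<pi> u) < At u v * Bt (?s v) (?s u)"
  proof -
    have "At u v = 1" using uv fuv by (simp add: At_def naive_pad_def)
    moreover have "Bt (\<pi> v) (\<pi> u) = 0" using uv fuv pfix by (simp add: Bt_def)
    moreover have "?B (?s v) (?s u)"
      using uv n hB[of "u + nc" "v + nc"] by (auto simp: shiftp_def min_def max_def)
    then have "Bt (?s v) (?s u) = 1" by (simp add: Bt_def)
    ultimately show ?thesis by simp
  qed
  have "(\<Sum>i<n. \<Sum>j<n. At i j * Bt (\<pi> j) (\<pi> i)) < (\<Sum>i<n. \<Sum>j<n. At i j * Bt (?s j) (?s i))"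
  proof (rule sum_strict_mono_ex1)
    show "\<forall>i\<in>{..<n}. (\<Sum>j<n. At i j * Bt (\<pi> j) (\<pi> i)) \<le> (\<Sum>j<n. At i j * Bt (?s j) (?s i))"
      using term_le by (auto intro: sum_mono)
    show "\<exists>i\<in>{..<n}. (\<Sum>j<n. At i j * Bt (\<pi> j) (\<pi> i)) < (\<Sum>j<n. At i j * Bt (?s j) (?s i))"
    proof (intro bexI)
      show "(\<Sum>j<n. At u j * Bt (\<pi> j) (\<pi> u)) < (\<Sum>j<n. At u j * Bt (?s j) (?s u))"
        apply (rule sum_strict_mono_ex1)
        using term_le term_lt uv n by auto
      show "u \<in> {..<n}" using uv n by auto
    qed
  qed simp
  then have "gm_objective n At Bt \<pi> < gm_objective n At Bt ?s"
    by (simp add: obj_simp[OF pin] obj_simp[OF sin])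
  with le show False by simp
qed

lemma support_B:
  fixes Lc R :: "nat \<Rightarrow> nat \<Rightarrow> real"
  assumes f: "f \<in> set_pmf (Pi_pmf (vertex_pairs n) (False, False)
          (edge_pmf nc (\<lambda>u v. if u < nc \<and> v < nc then Lc u v else 1) R))"
    and ab: "a < b" "b < n" "nc \<le> b"
  shows "snd (f (a, b))"
proof -
  have "f \<in> PiE_dflt (vertex_pairs n) (False, False)
          (set_pmf \<circ> edge_pmf nc (\<lambda>u v. if u < nc \<and> v < nc then Lc u v else 1) R)"
    using f by (simp add: set_Pi_pmf finite_vp)
  moreover have "(a, b) \<in> vertex_pairs n" using ab by (simp add: vertex_pairs_def)
  ultimately have "f (a, b) \<in> set_pmf (edge_pmf nc (\<lambda>u v. if u < nc \<and> v < nc then Lc u v else 1) R (a, b))"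
    unfolding PiE_dflt_def by auto
  then have "f (a, b) \<in> set_pmf (map_pmf (\<lambda>x. (False, x)) (bernoulli_pmf 1))"
    using ab by (simp add: edge_pmf_def)
  then obtain x where "x \<in> set_pmf (bernoulli_pmf 1)" "f (a, b) = (False, x)" by auto
  moreover from this(1) have "x" by (cases x) (auto simp: set_pmf_iff)
  ultimately show ?thesis by simp
qed


lemma card_vp_real: "0 < nc \<Longrightarrow> real (card (vertex_pairs nc)) = real nc * (real nc - 1) / 2"
proof -
  assume "0 < nc"
  have "real (card (vertex_pairs nc) * 2) = real (nc * (nc - 1))" by (simp only: card_vp)
  then show ?thesis using \<open>0 < nc\<close> by (simp add: of_nat_diff)
qed

lemma prob_bound:
  fixes Lc R :: "nat \<Rightarrow> nat \<Rightarrow> real"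
  assumes n: "0 < nc" "2 * nc < n"
    and hR: "\<forall>u<nc. \<forall>v<nc. 0 \<le> R u v \<and> R u v \<le> 1 \<and> R u v < \<rho>"
    and hL: "\<forall>u<nc. \<forall>v<nc. 0 \<le> Lc u v \<and> Lc u v \<le> \<beta>"
    and hb: "\<beta> < 1" and hr: "\<rho> < 1"
    and lower: "\<forall>u<nc. \<forall>v<nc. u \<noteq> v \<longrightarrow> Lc u v \<ge> c" and c: "0 \<le> c"
  shows "measure_pmf.prob (CorrER n nc (\<lambda>u v. if u < nc \<and> v < nc then Lc u v else 1) R)
            {(A, B). naive_mismatch n nc A B}
     \<ge> 1 - exp (- ((1 - \<rho>) * (1 - \<beta>) * c * (real nc * (real nc - 1) / 2)))"
proof -
  define L where "L = (\<lambda>u v. if u < nc \<and> v < nc then Lc u v else (1::real))"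
  define V where "V = vertex_pairs n"
  define W where "W = vertex_pairs nc"
  define P where "P = Pi_pmf V (False, False) (edge_pmf nc L R)"
  define g where "g = (\<lambda>f :: nat \<times> nat \<Rightarrow> bool \<times> bool.
      ((\<lambda>u v. u < nc \<and> v < nc \<and> u \<noteq> v \<and> fst (f (min u v, max u v))),
       (\<lambda>u v. u < n \<and> v < n \<and> u \<noteq> v \<and> snd (f (min u v, max u v)))))"
  define S where "S = {(A, B). naive_mismatch n nc A B}"
  define X where "X = (\<lambda>e. if e \<in> W then - {(True, False)} else (UNIV :: (bool \<times> bool) set))"
  define E where "E = Pi V X"
  define K where "K = (1 - \<rho>) * (1 - \<beta>) * c"
  have K0: "0 \<le> K" unfolding K_def using hb hr c by simp
  have WV: "W \<subseteq> V" using n by (auto simp: W_def V_def vertex_pairs_def)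
  have finV: "finite V" by (simp add: V_def finite_vp)
  have cor: "CorrER n nc L R = map_pmf g P"
    by (simp add: CorrER_def g_def P_def V_def)
  have step1: "measure_pmf.prob P (- E) \<le> measure_pmf.prob P (g -` S)"
  proof (rule measure_pmf.finite_measure_mono_AE)
    show "g -` S \<in> sets (measure_pmf P)" by simp
    show "AE x in measure_pmf P. x \<in> - E \<longrightarrow> x \<in> g -` S"
    proof (rule AE_pmfI, intro impI)
      fix y assume y: "y \<in> set_pmf P" and yE: "y \<in> - E"
      then obtain e where e: "e \<in> V" "y e \<notin> X e" unfolding E_def by auto
      then have eW: "e \<in> W" and ye: "y e = (True, False)"
        by (auto simp: X_def split: if_splits)
      obtain u v where uv: "e = (u, v)" by (cases e)
      with eW have uv': "u < v" "v < nc" by (auto simp: W_def vertex_pairs_def)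
      have hB: "\<And>a b. a < b \<Longrightarrow> b < n \<Longrightarrow> nc \<le> b \<Longrightarrow> snd (y (a, b))"
        using support_B[of y n nc Lc R] y unfolding P_def V_def L_def by blast
      have "naive_mismatch n nc (fst (g y)) (snd (g y))"
        unfolding g_def fst_conv snd_conv
        by (rule det_mismatch[where f=y, OF n(2) hB uv']) (use ye uv in auto)
      then show "y \<in> g -` S" by (simp add: S_def case_prod_beta)
    qed
  qed
  have step2: "measure_pmf.prob P (- E) = 1 - measure_pmf.prob P E"
  proof -
    have "- E = space (measure_pmf P) - E" by auto
    then show ?thesis using measure_pmf.prob_compl[of E P] by simp
  qed
  have step3: "measure_pmf.prob P E = (\<Prod>e\<in>V. measure_pmf.prob (edge_pmf nc L R e) (X e))"
    unfolding P_def E_def by (rule measure_Pi_pmf_Pi[OF finV])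
  have step4: "(\<Prod>e\<in>V. measure_pmf.prob (edge_pmf nc L R e) (X e))
        \<le> (\<Prod>e\<in>V. exp (- (if e \<in> W then K else 0)))"
  proof (rule prod_mono, intro ballI conjI)
    fix e assume eV: "e \<in> V"
    show "0 \<le> measure_pmf.prob (edge_pmf nc L R e) (X e)" by simp
    show "measure_pmf.prob (edge_pmf nc L R e) (X e) \<le> exp (- (if e \<in> W then K else 0))"
    proof (cases "e \<in> W")
      case False
      then show ?thesis by (simp add: X_def)
    next
      case True
      obtain u v where uv: "e = (u, v)" by (cases e)
      with True have uv': "u < v" "v < nc" by (auto simp: W_def vertex_pairs_def)
      define p where "p = Lc u v"
      define r where "r = R u v"
      have p: "0 \<le> p" "p \<le> \<beta>" "c \<le> p" using hL lower uv' unfolding p_def by auto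
      have r: "0 \<le> r" "r \<le> 1" "r < \<rho>" using hR uv' unfolding r_def by auto
      have ed: "edge_pmf nc L R e = corr_pair p r"
        using uv uv' by (simp add: edge_pmf_def L_def p_def r_def)
      have pr: "measure_pmf.prob (edge_pmf nc L R e) (X e) = 1 - (1 - r) * (p * (1 - p))"
        unfolding ed using True p r hb by (simp add: X_def prob_corr_notTF)
      have "K \<le> (1 - r) * (p * (1 - p))"
      proof -
        have "(1 - \<rho>) * (1 - \<beta>) * c \<le> (1 - r) * (1 - p) * p"
          by (intro mult_mono) (use p r hb hr c in auto)
        then show ?thesis unfolding K_def by (simp add: algebra_simps)
      qed
      then have "1 - (1 - r) * (p * (1 - p)) \<le> 1 + (- K)" by simp
      also have "\<dots> \<le> exp (- K)" by (rule exp_ge_add_one_self)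
      finally show ?thesis using pr True by simp
    qed
  qed
  have step5: "(\<Prod>e\<in>V. exp (- (if e \<in> W then K else 0))) = exp (- (real (card W) * K))"
  proof -
    have "(\<Prod>e\<in>V. exp (- (if e \<in> W then K else 0))) = exp (\<Sum>e\<in>V. - (if e \<in> W then K else 0))"
      by (simp add: exp_sum finV)
    also have "(\<Sum>e\<in>V. - (if e \<in> W then K else 0)) = - (\<Sum>e\<in>V. (if e \<in> W then K else 0))"
      by (simp add: sum_negf)
    also have "(\<Sum>e\<in>V. (if e \<in> W then K else 0)) = (\<Sum>e\<in>V \<inter> W. K)"
      using sum.inter_restrict[OF finV, of "\<lambda>_. K" W] by (simp only:)
    also have "V \<inter> W = W" using WV by auto
    finally show ?thesis by simp
  qed
  have "1 - exp (- (real (card W) * K)) \<le> measure_pmf.prob P (g -` S)"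
    using step1 step2 step3 step4 step5 by linarith
  moreover have "real (card W) * K = (1 - \<rho>) * (1 - \<beta>) * c * (real nc * (real nc - 1) / 2)"
    unfolding W_def K_def using card_vp_real[OF n(1)] by simp
  ultimately show ?thesis
    unfolding cor[unfolded L_def] S_def by (simp add: measure_map_pmf)
qed

theorem theorem1:
  shows "\<exists>C>0. \<forall>(nc :: nat \<Rightarrow> nat) (\<rho> :: real) (\<beta> :: real)
      (R :: nat \<Rightarrow> nat \<Rightarrow> nat \<Rightarrow> real) (\<Lambda>c :: nat \<Rightarrow> nat \<Rightarrow> nat \<Rightarrow> real).
    filterlim nc at_top at_top \<longrightarrow>
    (\<forall>\<^sub>F n in sequentially. 0 < nc n \<and> 2 * nc n < n) \<longrightarrow>
    0 < \<rho> \<longrightarrow> \<rho> < 1 \<longrightarrow> 0 < \<beta> \<longrightarrow> \<beta> < 1 \<longrightarrow>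
    (\<forall>n. \<forall>u<nc n. \<forall>v<nc n. 0 \<le> R n u v \<and> R n u v \<le> 1 \<and> R n u v = R n v u \<and> R n u v < \<rho>) \<longrightarrow>
    (\<forall>n. \<forall>u<nc n. \<forall>v<nc n. 0 \<le> \<Lambda>c n u v \<and> \<Lambda>c n u v \<le> 1 \<and> \<Lambda>c n u v = \<Lambda>c n v u
        \<and> \<Lambda>c n u v \<le> \<beta>) \<longrightarrow>
    (\<forall>M>0. \<forall>\<^sub>F n in sequentially. \<forall>u<nc n. \<forall>v<nc n. u \<noteq> v \<longrightarrow>
        \<Lambda>c n u v \<ge> M * (ln (real (nc n)) / real (nc n))) \<longrightarrow>
    (\<forall>\<epsilon>. 0 < \<epsilon> \<and> \<epsilon> < 1 - \<beta> - (1 - \<beta>) * \<rho> \<longrightarrow>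
      (\<exists>\<Lambda> :: nat \<Rightarrow> nat \<Rightarrow> nat \<Rightarrow> real. \<forall>\<^sub>F n in sequentially.
         (\<forall>u<n. \<forall>v<n. 0 \<le> \<Lambda> n u v \<and> \<Lambda> n u v \<le> 1 \<and> \<Lambda> n u v = \<Lambda> n v u) \<and>
         (\<forall>u<nc n. \<forall>v<nc n. \<Lambda> n u v = \<Lambda>c n u v) \<and>
         measure_pmf.prob (CorrER n (nc n) (\<Lambda> n) (R n))
             {(A, B). naive_mismatch n (nc n) A B}
           \<ge> 1 - exp (- C * \<epsilon>^2 * (ln (real (nc n)))^2)))"
proof (rule exI[of _ 1], intro conjI allI impI)
  fix nc :: "nat \<Rightarrow> nat" and \<rho> \<beta> :: real and R \<Lambda>c :: "nat \<Rightarrow> nat \<Rightarrow> nat \<Rightarrow> real" and \<epsilon> :: real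
  assume hev: "\<forall>\<^sub>F n in sequentially. 0 < nc n \<and> 2 * nc n < n"
    and r0: "0 < \<rho>" and r1: "\<rho> < 1" and b0: "0 < \<beta>" and b1: "\<beta> < 1"
    and hR: "\<forall>n. \<forall>u<nc n. \<forall>v<nc n. 0 \<le> R n u v \<and> R n u v \<le> 1 \<and> R n u v = R n v u \<and> R n u v < \<rho>"
    and hL: "\<forall>n. \<forall>u<nc n. \<forall>v<nc n. 0 \<le> \<Lambda>c n u v \<and> \<Lambda>c n u v \<le> 1 \<and> \<Lambda>c n u v = \<Lambda>c n v u
        \<and> \<Lambda>c n u v \<le> \<beta>"
    and hM: "\<forall>M>0. \<forall>\<^sub>F n in sequentially. \<forall>u<nc n. \<forall>v<nc n. u \<noteq> v \<longrightarrow>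
        \<Lambda>c n u v \<ge> M * (ln (real (nc n)) / real (nc n))"
    and he: "0 < \<epsilon> \<and> \<epsilon> < 1 - \<beta> - (1 - \<beta>) * \<rho>"
  define M where "M = 2 / ((1 - \<rho>) * (1 - \<beta>))"
  have M0: "M > 0" unfolding M_def using r1 b1 by simp
  have KM: "(1 - \<rho>) * (1 - \<beta>) * M = 2" unfolding M_def using r1 b1 by simp
  have e1: "\<epsilon>^2 \<le> 1"
  proof -
    have "1 - \<beta> - (1 - \<beta>) * \<rho> = (1 - \<beta>) * (1 - \<rho>)" by (simp add: algebra_simps)
    also have "\<dots> \<le> 1" using r0 r1 b0 b1 by (simp add: mult_le_one)
    finally have "\<epsilon> \<le> 1" using he by simp
    then show ?thesis using he by (simp add: power_le_one)
  qed
  define \<Lambda> where "\<Lambda> = (\<lambda>n u v. if u < nc n \<and> v < nc n then \<Lambda>c n u v else (1::real))"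
  show "\<exists>\<Lambda> :: nat \<Rightarrow> nat \<Rightarrow> nat \<Rightarrow> real. \<forall>\<^sub>F n in sequentially.
         (\<forall>u<n. \<forall>v<n. 0 \<le> \<Lambda> n u v \<and> \<Lambda> n u v \<le> 1 \<and> \<Lambda> n u v = \<Lambda> n v u) \<and>
         (\<forall>u<nc n. \<forall>v<nc n. \<Lambda> n u v = \<Lambda>c n u v) \<and>
         measure_pmf.prob (CorrER n (nc n) (\<Lambda> n) (R n))
             {(A, B). naive_mismatch n (nc n) A B}
           \<ge> 1 - exp (- 1 * \<epsilon>^2 * (ln (real (nc n)))^2)"
  proof (rule exI[of _ \<Lambda>])
    have ev: "\<forall>\<^sub>F n in sequentially. (0 < nc n \<and> 2 * nc n < n) \<and> (\<forall>u<nc n. \<forall>v<nc n. u \<noteq> v \<longrightarrow>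
        \<Lambda>c n u v \<ge> M * (ln (real (nc n)) / real (nc n)))"
      by (rule eventually_conj[OF hev]) (use hM M0 in blast)
    show "\<forall>\<^sub>F n in sequentially.
         (\<forall>u<n. \<forall>v<n. 0 \<le> \<Lambda> n u v \<and> \<Lambda> n u v \<le> 1 \<and> \<Lambda> n u v = \<Lambda> n v u) \<and>
         (\<forall>u<nc n. \<forall>v<nc n. \<Lambda> n u v = \<Lambda>c n u v) \<and>
         measure_pmf.prob (CorrER n (nc n) (\<Lambda> n) (R n))
             {(A, B). naive_mismatch n (nc n) A B}
           \<ge> 1 - exp (- 1 * \<epsilon>^2 * (ln (real (nc n)))^2)"
    proof (rule eventually_mono[OF ev], intro conjI)
      fix n assume hn: "(0 < nc n \<and> 2 * nc n < n) \<and> (\<forall>u<nc n. \<forall>v<nc n. u \<noteq> v \<longrightarrow>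
        \<Lambda>c n u v \<ge> M * (ln (real (nc n)) / real (nc n)))"
      show "\<forall>u<n. \<forall>v<n. 0 \<le> \<Lambda> n u v \<and> \<Lambda> n u v \<le> 1 \<and> \<Lambda> n u v = \<Lambda> n v u"
        using hL by (auto simp: \<Lambda>_def)
      show "\<forall>u<nc n. \<forall>v<nc n. \<Lambda> n u v = \<Lambda>c n u v" by (simp add: \<Lambda>_def)
      define x where "x = real (nc n)"
      have x1: "1 \<le> x" using hn by (simp add: x_def)
      define c where "c = M * (ln x / x)"
      have c0: "0 \<le> c" unfolding c_def using M0 x1 by simp
      have pb: "measure_pmf.prob (CorrER n (nc n) (\<Lambda> n) (R n)) {(A, B). naive_mismatch n (nc n) A B}
         \<ge> 1 - exp (- ((1 - \<rho>) * (1 - \<beta>) * c * (x * (x - 1) / 2)))"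
        unfolding \<Lambda>_def x_def
        by (rule prob_bound) (use hn hR hL b1 r1 c0 in \<open>auto simp: c_def x_def\<close>)
      have eq: "(1 - \<rho>) * (1 - \<beta>) * c * (x * (x - 1) / 2) = (x - 1) * ln x"
      proof -
        have "(1 - \<rho>) * (1 - \<beta>) * c * (x * (x - 1) / 2)
            = ((1 - \<rho>) * (1 - \<beta>) * M) * (ln x / x) * (x * (x - 1) / 2)"
          unfolding c_def by (simp only: mult.assoc)
        also have "\<dots> = (x - 1) * ln x" unfolding KM using x1 by (simp add: field_simps)
        finally show ?thesis .
      qed
      have lnx: "0 \<le> ln x" "ln x \<le> x - 1" using x1 by (auto simp: ln_le_minus_one)
      have "\<epsilon>^2 * (ln x)^2 \<le> 1 * (ln x)^2" using e1 by (intro mult_right_mono) auto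
      also have "\<dots> = ln x * ln x" by (simp add: power2_eq_square)
      also have "\<dots> \<le> (x - 1) * ln x" using lnx by (intro mult_right_mono) auto
      finally have "exp (- ((1 - \<rho>) * (1 - \<beta>) * c * (x * (x - 1) / 2))) \<le> exp (- 1 * \<epsilon>^2 * (ln x)^2)"
        unfolding eq by simp
      with pb show "measure_pmf.prob (CorrER n (nc n) (\<Lambda> n) (R n)) {(A, B). naive_mismatch n (nc n) A B}
           \<ge> 1 - exp (- 1 * \<epsilon>^2 * (ln (real (nc n)))^2)" unfolding x_def by linarith
    qed
  qed
qed (simp)

end
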